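(* Let $A\in\mathbb{C}^{n\times n}$ with $k=\mathrm{Ind}(A)$, and let $m\in\mathbb{N}=\{1,2,\dots\}$. Then: (a) $A^{\#_m}=0$ if and only if $A^k=0$; (b) $A^{\#_m}=A$ if and only if $A$ is an EP tripotent matrix; (c) $A^{\#_m}=A^*$ if and only if $A$ is an EP partial isometry; (d) $A^{\#_m}=P_A$ if and only if $A$ is idempotent.
   Context: For $A\in\mathbb{C}^{n\times n}$: $A^*$ conjugate transpose, $A^\dagger$ Moore–Penrose inverse, $P_A=AA^\dagger$, $\mathcal{R}(\cdot)$ column space, $A^0=I_n$. $A$ is EP if $\mathcal{R}(A)=\mathcal{R}(A^* )$; tripotent if $A^3=A$; a partial isometry if $AA^*A=A$. The index $\mathrm{Ind}(A)$ is the smallest nonnegative integer $k$ with $\mathcal{R}(A^k)=\mathcal{R}(A^{k+1})$. The core-EP inverse $A^{\mathrm{cEP}}$ is the unique $X$ with $XAX=X$ and $\mathcal{R}(X)=\mathcal{R}(X^* )=\mathcal{R}(A^k)$. For $m\in\mathbb{N}$, the $m$-weak group inverse is $A^{\mathrm{WG}_m}:=(A^{\mathrm{cEP}})^{m+1}A^m$ and the $m$-weak core inverse is $A^{\#_m}:=A^{\mathrm{WG}_m}P_{A^m}$. *)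

theory Defs
  imports "HOL-Analysis.Analysis"
begin

definition cadj :: "complex^'n^'m \<Rightarrow> complex^'m^'n" where
  "cadj A = (\<chi> i j. cnj (A $ j $ i))"

primrec mpow :: "complex^'n^'n \<Rightarrow> nat \<Rightarrow> complex^'n^'n" where
  "mpow A 0 = mat 1"
| "mpow A (Suc k) = A ** mpow A k"

definition colsp :: "complex^'n^'m \<Rightarrow> (complex^'m) set" where
  "colsp A = range (\<lambda>x. A *v x)"

definition is_MP_inverse :: "complex^'n^'m \<Rightarrow> complex^'m^'n \<Rightarrow> bool" where
  "is_MP_inverse A X \<longleftrightarrow> A ** X ** A = A \<and> X ** A ** X = X
     \<and> cadj (A ** X) = A ** X \<and> cadj (X ** A) = X ** A"

definition MP :: "complex^'n^'m \<Rightarrow> complex^'m^'n" where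
  "MP A = (THE X. is_MP_inverse A X)"

definition projA :: "complex^'n^'n \<Rightarrow> complex^'n^'n" where
  "projA A = A ** MP A"

definition ind :: "complex^'n^'n \<Rightarrow> nat" where
  "ind A = (LEAST k. colsp (mpow A k) = colsp (mpow A (Suc k)))"

definition coreEP :: "complex^'n^'n \<Rightarrow> complex^'n^'n" where
  "coreEP A = (THE X. X ** A ** X = X \<and> colsp X = colsp (cadj X)
                     \<and> colsp X = colsp (mpow A (ind A)))"

definition WG :: "nat \<Rightarrow> complex^'n^'n \<Rightarrow> complex^'n^'n" where
  "WG m A = mpow (coreEP A) (m + 1) ** mpow A m"

definition wcore :: "nat \<Rightarrow> complex^'n^'n \<Rightarrow> complex^'n^'n" where
  "wcore m A = WG m A ** projA (mpow A m)"

definition is_EP :: "complex^'n^'n \<Rightarrow> bool" where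
  "is_EP A \<longleftrightarrow> colsp A = colsp (cadj A)"

definition tripotent :: "complex^'n^'n \<Rightarrow> bool" where
  "tripotent A \<longleftrightarrow> A ** A ** A = A"

definition partial_isometry :: "complex^'n^'n \<Rightarrow> bool" where
  "partial_isometry A \<longleftrightarrow> A ** cadj A ** A = A"

definition idempotent_mat :: "complex^'n^'n \<Rightarrow> bool" where
  "idempotent_mat A \<longleftrightarrow> A ** A = A"

end

theory Submission
  imports Defs
begin


lemma cadj_cadj[simp]: "cadj (cadj A) = A"
  by (simp add: cadj_def vec_eq_iff)

lemma cadj_mult: "cadj (A ** B) = cadj B ** cadj A"
  by (simp add: cadj_def vec_eq_iff matrix_matrix_mult_def mult.commute)

lemma cadj_mat1[simp]: "cadj (mat 1 :: complex^'n::finite^'n) = mat 1"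
  by (simp add: cadj_def vec_eq_iff mat_def)

lemma cadj_zero[simp]: "cadj 0 = 0"
  by (simp add: cadj_def vec_eq_iff)

lemma cadj_diff: "cadj (A - B) = cadj A - cadj B"
  by (simp add: cadj_def vec_eq_iff)

lemma cadj_eq0: "cadj A = 0 \<longleftrightarrow> A = 0"
  by (metis cadj_cadj cadj_zero)

lemma mpow_Suc_right: "mpow A (Suc k) = mpow A k ** A"
  by (induction k) (simp_all add: matrix_mul_assoc)

lemma mpow_add: "mpow A (a + b) = mpow A a ** mpow A b"
  by (induction a) (simp_all add: matrix_mul_assoc)

lemma mpow_1[simp]: "mpow A 1 = A"
  by simp

lemma mpow_comm: "mpow A a ** mpow A b = mpow A b ** mpow A a"
  by (metis mpow_add add.commute)

lemma cadj_mpow: "cadj (mpow A k) = mpow (cadj A) k"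
  by (induction k) (simp_all add: cadj_mult, metis mpow_Suc_right mpow.simps(2))

lemma mv_axis: "(A *v axis j 1) $ i = (A $ i $ j :: 'a::semiring_1)"
  by (simp add: matrix_vector_mult_def axis_def if_distrib sum.delta' cong: if_cong)

lemma colsp_sub: "colsp A \<subseteq> colsp B \<longleftrightarrow> (\<exists>Y. A = B ** Y)"
proof
  assume h: "colsp A \<subseteq> colsp B"
  have "\<forall>j. \<exists>y. A *v axis j 1 = B *v y"
    using h unfolding colsp_def by blast
  then obtain y where y: "\<And>j. A *v axis j 1 = B *v y j" by metis
  define Y where "Y = (\<chi> i j. y j $ i)"
  have "A = B ** Y"
  proof -
    have "A $ i $ j = (B ** Y) $ i $ j" for i j
    proof -
      have "A $ i $ j = (A *v axis j 1) $ i"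
        by (simp add: mv_axis)
      also have "\<dots> = (B *v y j) $ i" by (simp add: y)
      also have "\<dots> = (B ** Y) $ i $ j"
        by (simp add: matrix_vector_mult_def matrix_matrix_mult_def Y_def)
      finally show ?thesis .
    qed
    then show ?thesis by (simp add: vec_eq_iff)
  qed
  then show "\<exists>Y. A = B ** Y" by blast
next
  assume "\<exists>Y. A = B ** Y"
  then obtain Y where "A = B ** Y" by blast
  then show "colsp A \<subseteq> colsp B"
    unfolding colsp_def by (auto simp: matrix_vector_mul_assoc[symmetric])
qed

lemma colsp_eq: "colsp A = colsp B \<longleftrightarrow> (\<exists>Y. A = B ** Y) \<and> (\<exists>Z. B = A ** Z)"
  by (metis colsp_sub subset_antisym order_refl)

lemma colsp_mult: "colsp (A ** B) \<subseteq> colsp A"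
  using colsp_sub by blast


lemma inner_cmult: "inner (a::complex) (b * c) = inner (cnj b * a) c"
  by (simp add: inner_complex_def algebra_simps)

lemma inner_adj:
  fixes A :: "complex^'n^'m"
  shows "inner z (A *v w) = inner (cadj A *v z) w"
proof -
  have "inner z (A *v w) = (\<Sum>i\<in>UNIV. \<Sum>k\<in>UNIV. inner (z$i) (A$i$k * w$k))"
    by (simp add: inner_vec_def matrix_vector_mult_def inner_sum_right)
  also have "\<dots> = (\<Sum>k\<in>UNIV. \<Sum>i\<in>UNIV. inner (cnj (A$i$k) * z$i) (w$k))"
    by (subst sum.swap) (simp add: inner_cmult)
  also have "\<dots> = inner (cadj A *v z) w"
    by (simp add: inner_vec_def matrix_vector_mult_def inner_sum_left cadj_def)
  finally show ?thesis .
qed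

lemma mat_eq_cols:
  fixes M N :: "'a::semiring_1^'n^'m"
  assumes "\<And>j. M *v axis j 1 = N *v axis j 1"
  shows "M = N"
proof -
  have "M $ i $ j = N $ i $ j" for i j
    using assms[of j] by (metis mv_axis)
  then show ?thesis by (simp add: vec_eq_iff)
qed

lemma mv_diff: "(M - N) *v x = M *v x - N *v (x::'a::ring_1^'n)"
  by (simp add: matrix_vector_mult_def vec_eq_iff sum_subtractf algebra_simps)

lemma mv_scaleR: "c *\<^sub>R (A *v x) = A *v (c *\<^sub>R (x::complex^'n))"
  by (simp add: vec_eq_iff matrix_vector_mult_def scaleR_sum_right)

lemma subspace_colsp: "subspace (colsp (A::complex^'n^'m))"
  unfolding subspace_def colsp_def
proof (intro conjI ballI)
  show "0 \<in> range ((*v) A)" by (metis matrix_vector_mult_0_right rangeI)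
  fix x y assume "x \<in> range ((*v) A)" "y \<in> range ((*v) A)"
  then show "x + y \<in> range ((*v) A)" by (auto simp: matrix_vector_right_distrib[symmetric])
next
  show "\<forall>c. \<forall>x\<in>range ((*v) A). c *\<^sub>R x \<in> range ((*v) A)"
    by (auto simp: mv_scaleR)
qed

lemma matrix_sub_rdistrib: "(A - B) ** C = A ** C - B ** (C::'a::ring_1^_^_)"
  by (simp add: matrix_matrix_mult_def vec_eq_iff sum_subtractf algebra_simps)

lemma matrix_sub_ldistrib: "C ** (A - B) = C ** A - C ** (B::'a::ring_1^_^_)"
  by (simp add: matrix_matrix_mult_def vec_eq_iff sum_subtractf algebra_simps)

lemma normal_eq_solvable:
  fixes A :: "complex^'n^'m"
  shows "\<exists>c. cadj A *v (b - A *v c) = 0"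
proof -
  obtain y z where y: "y \<in> span (colsp A)" and z: "\<And>w. w \<in> span (colsp A) \<Longrightarrow> orthogonal z w"
    and b: "b = y + z"
    using orthogonal_subspace_decomp_exists[of "colsp A" b] by metis
  have sp: "span (colsp A) = colsp A" using subspace_colsp span_eq_iff by blast
  obtain c where c: "y = A *v c" using y sp unfolding colsp_def by auto
  let ?w = "cadj A *v z"
  have "A *v ?w \<in> span (colsp A)" using sp unfolding colsp_def by (metis rangeI)
  then have "inner z (A *v ?w) = 0" using z orthogonal_def by blast
  then have "inner ?w ?w = 0" by (simp add: inner_adj)
  then have "?w = 0" by simp
  moreover have "b - A *v c = z" using b c by simp
  ultimately show ?thesis by auto
qed

lemma proj_exists:
  fixes A :: "complex^'n^'n"
  shows "\<exists>P C. cadj P = P \<and> P ** P = P \<and> P ** A = A \<and> P = A ** C"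
proof -
  have "\<forall>j. \<exists>c. cadj A *v (axis j 1 - A *v c) = 0"
    using normal_eq_solvable by blast
  then obtain c where c: "\<And>j. cadj A *v (axis j 1 - A *v c j) = 0" by metis
  define C where "C = (\<chi> i j. c j $ i)"
  have Cc: "C *v axis j 1 = c j" for j
    by (simp add: vec_eq_iff mv_axis C_def)
  define P where "P = A ** C"
  have "cadj A ** (mat 1 - P) = 0"
  proof (rule mat_eq_cols)
    fix j
    show "(cadj A ** (mat 1 - P)) *v axis j 1 = 0 *v axis j 1"
      using c[of j] by (simp add: matrix_vector_mul_assoc[symmetric] mv_diff P_def Cc)
  qed
  then have "cadj (mat 1 - P) ** A = 0"
    by (metis cadj_cadj cadj_mult cadj_zero)
  then have "A - cadj P ** A = 0"
    by (simp add: cadj_diff matrix_sub_rdistrib)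
  then have A1: "A = cadj P ** A" by simp
  have "cadj P ** P = (cadj P ** A) ** C" by (simp add: P_def matrix_mul_assoc)
  also have "\<dots> = P" using A1 P_def by simp
  finally have "cadj P ** P = P" .
  then have PH: "cadj P = P"
    by (metis cadj_cadj cadj_mult)
  have "P ** A = A" using A1 PH by simp
  moreover have "P ** P = P" using \<open>cadj P ** P = P\<close> PH by simp
  ultimately show ?thesis using PH P_def by blast
qed


lemma MP_exists:
  fixes A :: "complex^'n^'n"
  shows "\<exists>X. is_MP_inverse A X"
proof -
  obtain P C where P: "cadj P = P" "P ** P = P" "P ** A = A" "P = A ** C"
    using proj_exists by blast
  obtain Q D where Q: "cadj Q = Q" "Q ** Q = Q" "Q ** cadj A = cadj A" "Q = cadj A ** D"
    using proj_exists by blast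
  have AQ: "A ** Q = A" by (metis Q(1) Q(3) cadj_cadj cadj_mult)
  have Q2: "Q = cadj D ** A" by (metis Q(1) Q(4) cadj_cadj cadj_mult)
  define X where "X = Q ** C"
  have AX: "A ** X = P" unfolding X_def by (simp add: matrix_mul_assoc AQ P(4))
  have ACA: "A ** C ** A = A" using P(3) P(4) by simp
  have XA: "X ** A = Q"
  proof -
    have "X ** A = cadj D ** (A ** C ** A)" unfolding X_def Q2 by (simp add: matrix_mul_assoc)
    also have "\<dots> = Q" using ACA Q2 by simp
    finally show ?thesis .
  qed
  have "A ** X ** A = A" using AX P(3) by simp
  moreover have "X ** A ** X = X" using XA X_def Q(2) by (simp add: matrix_mul_assoc)
  ultimately show ?thesis unfolding is_MP_inverse_def using AX XA P(1) Q(1) by auto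
qed

lemma MP_unique:
  fixes A :: "complex^'n^'n"
  assumes X: "is_MP_inverse A X" and Y: "is_MP_inverse A Y"
  shows "X = Y"
proof -
  have x1: "A ** X ** A = A" and x2: "X ** A ** X = X" and x3: "cadj (A ** X) = A ** X"
    and x4: "cadj (X ** A) = X ** A" using X unfolding is_MP_inverse_def by auto
  have y1: "A ** Y ** A = A" and y2: "Y ** A ** Y = Y" and y3: "cadj (A ** Y) = A ** Y"
    and y4: "cadj (Y ** A) = Y ** A" using Y unfolding is_MP_inverse_def by auto
  have a1: "cadj A = cadj A ** A ** Y"
  proof -
    have "cadj A = cadj (A ** Y ** A)" using y1 by simp
    also have "\<dots> = cadj A ** cadj (A ** Y)" by (simp add: cadj_mult matrix_mul_assoc)
    also have "\<dots> = cadj A ** A ** Y" using y3 by (simp add: matrix_mul_assoc)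
    finally show ?thesis .
  qed
  have a2: "cadj A = X ** A ** cadj A"
  proof -
    have "cadj A = cadj (A ** X ** A)" using x1 by simp
    also have "\<dots> = cadj (X ** A) ** cadj A" by (simp add: cadj_mult matrix_mul_assoc)
    also have "\<dots> = X ** A ** cadj A" using x4 by simp
    finally show ?thesis .
  qed
  have "X = X ** cadj (A ** X)" using x2 x3 by (simp add: matrix_mul_assoc)
  also have "\<dots> = X ** cadj X ** cadj A" by (simp add: cadj_mult matrix_mul_assoc)
  also have "\<dots> = X ** cadj X ** (cadj A ** A ** Y)" using a1 by simp
  also have "\<dots> = X ** cadj (A ** X) ** A ** Y" by (simp add: cadj_mult matrix_mul_assoc)
  also have "\<dots> = X ** A ** X ** A ** Y" using x3 by (simp add: matrix_mul_assoc)
  also have "\<dots> = X ** A ** Y" using x2 by simp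
  finally have eX: "X = X ** A ** Y" .
  have "Y = cadj (Y ** A) ** Y" using y2 y4 by simp
  also have "\<dots> = cadj A ** cadj Y ** Y" by (simp add: cadj_mult)
  also have "\<dots> = (X ** A ** cadj A) ** cadj Y ** Y" using a2 by simp
  also have "\<dots> = X ** A ** cadj (Y ** A) ** Y" by (simp add: cadj_mult matrix_mul_assoc)
  also have "\<dots> = X ** A ** (Y ** A ** Y)" using y4 by (simp add: matrix_mul_assoc)
  also have "\<dots> = X ** A ** Y" using y2 by simp
  finally show ?thesis using eX by simp
qed

lemma MP_props:
  fixes A :: "complex^'n^'n"
  shows "A ** MP A ** A = A" "MP A ** A ** MP A = MP A"
    "cadj (A ** MP A) = A ** MP A" "cadj (MP A ** A) = MP A ** A"
proof -
  have "is_MP_inverse A (MP A)"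
    unfolding MP_def using MP_exists MP_unique by (metis theI)
  then show "A ** MP A ** A = A" "MP A ** A ** MP A = MP A"
    "cadj (A ** MP A) = A ** MP A" "cadj (MP A ** A) = MP A ** A"
    unfolding is_MP_inverse_def by auto
qed

lemma MP_eqI:
  fixes A :: "complex^'n^'n"
  assumes "is_MP_inverse A X" shows "MP A = X"
  unfolding MP_def using assms MP_unique by blast

lemma projA_props:
  fixes A :: "complex^'n^'n"
  shows "cadj (projA A) = projA A" "projA A ** projA A = projA A" "projA A ** A = A"
    "projA A = A ** MP A"
  unfolding projA_def using MP_props[of A] by (auto simp: matrix_mul_assoc)

lemma orth_proj_unique:
  fixes P1 P2 :: "complex^'n^'n"
  assumes "cadj P1 = P1" "cadj P2 = P2" "P1 ** P2 = P2" "P2 ** P1 = P1"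
  shows "P1 = P2"
  by (metis assms cadj_mult)

lemma proj_range_unique:
  fixes P1 P2 M1 M2 :: "complex^'n^'n"
  assumes "cadj P1 = P1" "P1 ** M1 = M1" "P1 = M1 ** C1"
    "cadj P2 = P2" "P2 ** M2 = M2" "P2 = M2 ** C2"
    "colsp M1 = colsp M2"
  shows "P1 = P2"
proof -
  obtain Y Z where Y: "M1 = M2 ** Y" and Z: "M2 = M1 ** Z" using assms(7) colsp_eq by blast
  have "P1 ** M2 = M2" using Z assms(2) by (metis matrix_mul_assoc)
  then have "P1 ** P2 = P2" using assms(6) by (metis matrix_mul_assoc)
  moreover have "P2 ** M1 = M1" using Y assms(5) by (metis matrix_mul_assoc)
  then have "P2 ** P1 = P1" using assms(3) by (metis matrix_mul_assoc)
  ultimately show ?thesis using orth_proj_unique assms by blast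
qed


lemma trace_herm_zero:
  fixes E :: "complex^'n^'n"
  assumes "cadj E = E" "E ** E = E" "trace E = 0"
  shows "E = 0"
proof -
  have "trace E = trace (cadj E ** E)" using assms by simp
  also have "\<dots> = (\<Sum>i\<in>UNIV. \<Sum>k\<in>UNIV. E$k$i * cnj (E$k$i))"
    by (simp add: trace_def matrix_matrix_mult_def cadj_def mult.commute)
  also have "\<dots> = of_real (\<Sum>i\<in>UNIV. \<Sum>k\<in>UNIV. (norm (E$k$i))\<^sup>2)"
    by (simp only: of_real_sum complex_norm_square)
  finally have "of_real (\<Sum>i\<in>UNIV. \<Sum>k\<in>UNIV. (norm (E$k$i))\<^sup>2) = (0::complex)"
    using assms(3) by simp
  then have "(\<Sum>i\<in>UNIV. \<Sum>k\<in>UNIV. (norm (E$k$i))\<^sup>2) = 0" by (simp only: of_real_eq_0_iff)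
  then have "\<forall>i. (\<Sum>k\<in>UNIV. (norm (E$k$i))\<^sup>2) = 0"
    by (simp add: sum_nonneg sum_nonneg_eq_0_iff)
  then have "\<forall>i k. (norm (E$k$i))\<^sup>2 = 0"
    by (simp add: sum_nonneg_eq_0_iff)
  then show ?thesis by (simp add: vec_eq_iff)
qed

lemma trace_proj_eq:
  fixes E F :: "complex^'n^'n"
  assumes "cadj E = E" "E ** E = E" "cadj F = F" "F ** F = F" "E ** F = F"
    "trace E = trace F"
  shows "E = F"
proof -
  have FE: "F ** E = F" by (metis assms(1,3,5) cadj_mult)
  let ?G = "E - F"
  have "cadj ?G = ?G" using assms by (simp add: cadj_diff)
  moreover have "?G ** ?G = ?G"
    using assms FE by (simp add: matrix_sub_rdistrib matrix_sub_ldistrib)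
  moreover have "trace ?G = 0" using assms(6) by (simp add: trace_sub)
  ultimately have "?G = 0" using trace_herm_zero by blast
  then show ?thesis by simp
qed

lemma stable_inj:
  fixes A B :: "complex^'n^'n"
  assumes st: "colsp B = colsp (A ** B)"
  shows "B = B ** MP (A ** B) ** (A ** B)"
proof -
  define N where "N = A ** B"
  define QB where "QB = MP B ** B"
  define QN where "QN = MP N ** N"
  have QBh: "cadj QB = QB" "QB ** QB = QB" unfolding QB_def using MP_props[of B]
    by (auto simp: matrix_mul_assoc)
  have QNh: "cadj QN = QN" "QN ** QN = QN" unfolding QN_def using MP_props[of N]
    by (auto simp: matrix_mul_assoc)
  have BQ: "B ** QB = B" unfolding QB_def using MP_props[of B] by (simp add: matrix_mul_assoc)
  have QBB: "QB ** cadj B = cadj B" by (metis BQ QBh(1) cadj_mult)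
  have "QN = cadj QN" using QNh by simp
  also have "\<dots> = cadj B ** (cadj A ** cadj (MP N))"
    unfolding QN_def N_def by (simp add: cadj_mult matrix_mul_assoc)
  finally have QNe: "QN = cadj B ** (cadj A ** cadj (MP N))" .
  have "QB ** QN = QN" unfolding QNe using QBB by (simp add: matrix_mul_assoc)
  moreover have "trace QB = trace QN"
  proof -
    have "trace QB = trace (B ** MP B)" unfolding QB_def by (rule trace_mul_sym)
    also have "B ** MP B = N ** MP N"
      using proj_range_unique[of "B ** MP B" B "MP B" "N ** MP N" N "MP N"]
        MP_props[of B] MP_props[of N] st N_def by (simp add: matrix_mul_assoc)
    also have "trace (N ** MP N) = trace QN" unfolding QN_def by (rule trace_mul_sym)
    finally show ?thesis .
  qed
  ultimately have "QB = QN" using trace_proj_eq QBh QNh by blast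
  then show ?thesis using BQ unfolding QN_def N_def by (simp add: matrix_mul_assoc)
qed

lemma ind_exists:
  fixes A :: "complex^'n^'n"
  shows "\<exists>k. colsp (mpow A k) = colsp (mpow A (Suc k))"
proof (rule ccontr)
  assume "\<not> ?thesis"
  then have ne: "\<And>k. colsp (mpow A (Suc k)) \<noteq> colsp (mpow A k)" by metis
  have sub: "colsp (mpow A (Suc k)) \<subseteq> colsp (mpow A k)" for k
    by (metis mpow_Suc_right colsp_mult)
  have sp: "span (colsp M) = colsp M" for M :: "complex^'n^'n"
    using subspace_colsp span_eq_iff by blast
  have lt: "dim (colsp (mpow A (Suc k))) < dim (colsp (mpow A k))" for k
    using sub[of k] ne[of k] sp dim_psubset by (metis psubsetI)
  have "dim (colsp (mpow A k)) + k \<le> dim (colsp (mpow A 0))" for k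
  proof (induction k)
    case 0 then show ?case by simp
  next
    case (Suc k) then show ?case using lt[of k] by simp
  qed
  moreover have "dim (colsp (mpow A 0)) \<le> DIM(complex^'n)" by (rule dim_subset_UNIV)
  ultimately have "DIM(complex^'n) + 1 \<le> DIM(complex^'n)"
    by (metis add_le_imp_le_right le_add2 order_trans)
  then show False by simp
qed

lemma ind_stable:
  fixes A :: "complex^'n^'n"
  shows "colsp (mpow A (ind A)) = colsp (mpow A (Suc (ind A)))"
  unfolding ind_def using ind_exists[of A] by (rule LeastI_ex)


definition cep :: "complex^'n^'n \<Rightarrow> complex^'n^'n \<Rightarrow> bool" where
  "cep A X \<longleftrightarrow> X ** A ** X = X \<and> colsp X = colsp (cadj X) \<and> colsp X = colsp (mpow A (ind A))"

lemma stable_B: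
  fixes A :: "complex^'n^'n"
  shows "\<exists>Y. mpow A (ind A) = A ** mpow A (ind A) ** Y"
  using ind_stable[of A] colsp_eq by (metis mpow.simps(2) matrix_mul_assoc)

lemma AB_comm: "A ** mpow A k = mpow A k ** A"
  by (metis mpow.simps(2) mpow_Suc_right)

lemma cep_props:
  fixes A X :: "complex^'n^'n"
  assumes "cep A X"
  defines "B \<equiv> mpow A (ind A)"
  shows "A ** X = projA B" "X ** A ** B = B" "\<exists>V. X = B ** V" "X ** projA B = X"
proof -
  have x1: "X ** A ** X = X" and x2: "colsp X = colsp (cadj X)" and x3: "colsp X = colsp B"
    using assms unfolding cep_def B_def by auto
  obtain V where V: "X = B ** V" using x3 colsp_eq by blast
  obtain Z where Z: "B = X ** Z" using x3 colsp_eq by blast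
  obtain U where U: "cadj X = B ** U" using x2 x3 colsp_eq by metis
  obtain Y where Y: "B = A ** B ** Y" using stable_B[of A] B_def by blast
  let ?P = "projA B"
  have PB: "?P ** B = B" "cadj ?P = ?P" "?P = B ** MP B" using projA_props by auto
  have XAB: "X ** A ** B = B" using x1 Z by (metis matrix_mul_assoc)
  have "cadj X = ?P ** cadj X" using U PB by (metis matrix_mul_assoc)
  then have XP: "X ** ?P = X" by (metis PB(2) cadj_cadj cadj_mult)
  have EB: "A ** X ** B = B"
  proof -
    have "A ** X ** B = A ** X ** (A ** B ** Y)" by (metis Y)
    also have "\<dots> = A ** (X ** A ** B) ** Y" by (simp add: matrix_mul_assoc)
    also have "\<dots> = B" using XAB Y by simp
    finally show ?thesis .
  qed
  have "A ** X = A ** (X ** ?P)" using XP by simp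
  also have "\<dots> = A ** X ** ?P" by (simp add: matrix_mul_assoc)
  also have "\<dots> = ?P" using EB PB(3) by (metis matrix_mul_assoc)
  finally show "A ** X = ?P" .
  show "X ** A ** B = B" by fact
  show "\<exists>V. X = B ** V" using V by blast
  show "X ** ?P = X" by fact
qed

lemma cep_unique:
  fixes A :: "complex^'n^'n"
  assumes "cep A X1" "cep A X2" shows "X1 = X2"
proof -
  obtain V where V: "X2 = mpow A (ind A) ** V" using cep_props(3)[OF assms(2)] by blast
  have "X1 = X1 ** (A ** X2)" using cep_props(1,4)[OF assms(1)] cep_props(1)[OF assms(2)] by simp
  also have "\<dots> = (X1 ** A ** mpow A (ind A)) ** V" using V by (simp add: matrix_mul_assoc)
  also have "\<dots> = X2" using cep_props(2)[OF assms(1)] V by simp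
  finally show ?thesis .
qed

lemma cep_exists:
  fixes A :: "complex^'n^'n"
  shows "\<exists>X. cep A X"
proof -
  define B where "B = mpow A (ind A)"
  obtain Y where Y: "B = A ** B ** Y" using stable_B[of A] B_def by blast
  define X where "X = B ** Y ** MP B"
  let ?P = "projA B"
  have PB: "?P ** B = B" "cadj ?P = ?P" "?P = B ** MP B" using projA_props by auto
  have AX: "A ** X = ?P" unfolding X_def using Y PB(3) by (metis matrix_mul_assoc)
  have "X ** ?P = B ** Y ** (MP B ** B ** MP B)" by (simp add: X_def PB(3) matrix_mul_assoc)
  then have XP: "X ** ?P = X" using MP_props(2)[of B] X_def by simp
  have x1: "X ** A ** X = X" using AX XP by (metis matrix_mul_assoc)
  have sub1: "colsp X \<subseteq> colsp B" unfolding X_def colsp_sub by (metis matrix_mul_assoc)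
  have st: "colsp B = colsp (A ** B)" using ind_stable[of A] B_def by simp
  define G where "G = MP (A ** B)"
  have BG: "B = B ** G ** (A ** B)" using stable_inj[OF st] G_def by simp
  define T where "T = X ** A ** B"
  have AT: "A ** T = A ** B"
  proof -
    have "A ** T = ?P ** A ** B" unfolding T_def using AX by (simp add: matrix_mul_assoc)
    also have "\<dots> = ?P ** (A ** B)" by (simp add: matrix_mul_assoc)
    also have "\<dots> = ?P ** (B ** A)" using AB_comm[of A "ind A"] B_def by simp
    also have "\<dots> = ?P ** B ** A" by (simp add: matrix_mul_assoc)
    also have "\<dots> = A ** B" using PB(1) AB_comm[of A "ind A"] B_def by simp
    finally show ?thesis .
  qed
  obtain S where S: "T = B ** S" unfolding T_def X_def by (metis matrix_mul_assoc)
  have "T = B ** G ** (A ** T)" using S BG by (metis matrix_mul_assoc)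
  also have "\<dots> = B" using AT BG by simp
  finally have "T = B" .
  then have sub2: "colsp B \<subseteq> colsp X" unfolding T_def colsp_sub by (metis matrix_mul_assoc)
  have "cadj X = ?P ** cadj X" using XP by (metis PB(2) cadj_mult)
  then have sub3: "colsp (cadj X) \<subseteq> colsp B" unfolding PB(3) colsp_sub by (metis matrix_mul_assoc)
  have "B = cadj X ** (cadj A ** B)" using PB AX by (metis cadj_mult matrix_mul_assoc)
  then have sub4: "colsp B \<subseteq> colsp (cadj X)" unfolding colsp_sub by blast
  have "cep A X" unfolding cep_def using x1 sub1 sub2 sub3 sub4 B_def by blast
  then show ?thesis by blast
qed

lemma coreEP_cep:
  fixes A :: "complex^'n^'n"
  shows "cep A (coreEP A)"
proof -
  have "coreEP A = (THE X. cep A X)" unfolding coreEP_def cep_def by simp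
  then show ?thesis using cep_exists[of A] cep_unique[of A] by (metis theI)
qed

lemma coreEP_eqI:
  fixes A :: "complex^'n^'n"
  assumes "cep A X" shows "coreEP A = X"
  using cep_unique coreEP_cep assms by blast


lemma B_stable_pow:
  fixes A :: "complex^'n^'n"
  shows "\<exists>Y. mpow A (ind A) = mpow A j ** mpow A (ind A) ** Y"
proof (induction j)
  case 0 show ?case by (metis matrix_mul_lid matrix_mul_rid mpow.simps(1))
next
  case (Suc j)
  then obtain Yj where Yj: "mpow A (ind A) = mpow A j ** mpow A (ind A) ** Yj" by blast
  obtain Y where Y: "mpow A (ind A) = A ** mpow A (ind A) ** Y" using stable_B by blast
  have "mpow A (ind A) = mpow A j ** (A ** mpow A (ind A) ** Y) ** Yj" by (metis Yj Y)
  also have "\<dots> = mpow A (Suc j) ** mpow A (ind A) ** (Y ** Yj)"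
    by (simp add: mpow_Suc_right matrix_mul_assoc del: mpow.simps)
  finally show ?case by blast
qed

lemma B_sub_A:
  fixes A :: "complex^'n^'n"
  shows "colsp (mpow A (ind A)) \<subseteq> colsp A"
proof (cases "ind A")
  case 0
  obtain Y where Y: "mpow A (ind A) = A ** mpow A (ind A) ** Y" using stable_B by blast
  then have "mat 1 = A ** Y" using 0 by simp
  then show ?thesis using 0 colsp_sub by (metis mpow.simps(1))
next
  case (Suc k) then show ?thesis using colsp_mult by (metis mpow.simps(2))
qed

definition I1 :: "complex^'n^'n \<Rightarrow> bool" where
  "I1 A \<longleftrightarrow> (\<exists>Z. A = A ** A ** Z)"

lemma A_sub_B_I1:
  fixes A :: "complex^'n^'n"
  assumes "colsp A \<subseteq> colsp (mpow A (ind A))"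
  shows "I1 A"
proof -
  obtain Z where Z: "A = mpow A (ind A) ** Z" using assms colsp_sub by blast
  obtain Y where Y: "mpow A (ind A) = A ** mpow A (ind A) ** Y" using stable_B by blast
  show ?thesis
  proof (cases "ind A")
    case 0
    then have "mat 1 = A ** Y" using Y by simp
    then have "A = A ** A ** Y" by (metis matrix_mul_assoc matrix_mul_rid)
    then show ?thesis unfolding I1_def by blast
  next
    case (Suc k)
    have "A = A ** mpow A (ind A) ** Y ** Z" using Y Z by metis
    also have "\<dots> = A ** A ** (mpow A k ** Y ** Z)" using Suc by (simp add: matrix_mul_assoc)
    finally show ?thesis unfolding I1_def by blast
  qed
qed

lemma I1_pow:
  fixes A :: "complex^'n^'n"
  assumes "I1 A"
  shows "\<exists>Z. A = mpow A (Suc j) ** Z"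
proof (induction j)
  case 0 show ?case by (metis matrix_mul_rid mpow_1 One_nat_def)
next
  case (Suc j)
  obtain Z0 where Z0: "A = A ** A ** Z0" using assms I1_def by blast
  obtain Z where Z: "A = mpow A (Suc j) ** Z" using Suc by blast
  have "A = mpow A j ** A ** Z" using Z by (simp add: mpow_Suc_right[symmetric])
  also have "\<dots> = mpow A j ** (A ** A ** Z0) ** Z" using Z0 by metis
  also have "\<dots> = mpow A (Suc (Suc j)) ** (Z0 ** Z)"
    by (simp add: matrix_mul_assoc mpow_Suc_right del: mpow.simps)
  finally show ?case by blast
qed

lemma I1_colsp_pow:
  fixes A :: "complex^'n^'n"
  assumes "I1 A" "m \<ge> 1"
  shows "colsp (mpow A m) = colsp A"
proof -
  obtain j where j: "m = Suc j" using assms(2) by (cases m) auto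
  show ?thesis using I1_pow[OF assms(1), of j] j colsp_eq by (metis mpow.simps(2))
qed

lemma I1_colsp_B:
  fixes A :: "complex^'n^'n"
  assumes "I1 A"
  shows "colsp (mpow A (ind A)) = colsp A"
proof (cases "ind A")
  case 0
  obtain Y where Y: "mpow A (ind A) = A ** mpow A (ind A) ** Y" using stable_B by blast
  then have "mat 1 = A ** Y" using 0 by simp
  then show ?thesis using 0 colsp_eq by (metis matrix_mul_lid mpow.simps(1))
next
  case (Suc k) then show ?thesis using I1_colsp_pow[OF assms, of "ind A"] by simp
qed

lemma W_eq_X:
  fixes A :: "complex^'n^'n"
  assumes "I1 A" "m \<ge> 1"
  shows "wcore m A = coreEP A"
proof -
  define X where "X = coreEP A"
  define B where "B = mpow A (ind A)"
  have c: "cep A X" unfolding X_def by (rule coreEP_cep)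
  have AX: "A ** X = projA B" using cep_props(1)[OF c] B_def by simp
  have XAB: "X ** A ** B = B" using cep_props(2)[OF c] B_def by simp
  have Q: "projA (mpow A m) = projA B"
    using proj_range_unique[OF projA_props(1)[of "mpow A m"] projA_props(3)[of "mpow A m"]
      projA_props(4)[of "mpow A m"] projA_props(1)[of B] projA_props(3)[of B] projA_props(4)[of B]]
      I1_colsp_pow[OF assms] I1_colsp_B[OF assms(1)] B_def by simp
  obtain Z where Z: "A = B ** Z" using I1_colsp_B[OF assms(1)] B_def colsp_eq by blast
  have XAA: "X ** A ** A = A" using XAB Z by (metis matrix_mul_assoc)
  have pw: "mpow X (Suc i) ** mpow A (Suc i) = X ** A" for i
  proof (induction i)
    case 0 then show ?case by simp
  next
    case (Suc i)
    have "mpow X (Suc (Suc i)) ** mpow A (Suc (Suc i))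
        = mpow X (Suc i) ** (X ** A ** A) ** mpow A i"
      by (simp only: mpow_Suc_right[of X "Suc i"] mpow.simps(2)[of A "Suc i"] mpow.simps(2)[of A i] matrix_mul_assoc)
    also have "\<dots> = mpow X (Suc i) ** mpow A (Suc i)" using XAA by (simp add: matrix_mul_assoc)
    finally show ?case using Suc by simp
  qed
  have "wcore m A = mpow X (m + 1) ** mpow A m ** (A ** X)"
    unfolding wcore_def WG_def X_def using Q AX X_def by simp
  also have "\<dots> = mpow X (Suc m) ** (mpow A m ** A) ** X"
    by (simp add: matrix_mul_assoc del: mpow.simps)
  also have "\<dots> = mpow X (Suc m) ** mpow A (Suc m) ** X"
    by (simp only: mpow_Suc_right[of A m])
  also have "\<dots> = X" using pw[of m] c by (simp add: cep_def)
  finally show ?thesis unfolding X_def .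
qed

lemma W_sub_B:
  fixes A :: "complex^'n^'n"
  shows "colsp (wcore m A) \<subseteq> colsp (mpow A (ind A))"
proof -
  have "wcore m A = coreEP A ** (mpow (coreEP A) m ** mpow A m ** projA (mpow A m))"
    unfolding wcore_def WG_def by (simp add: matrix_mul_assoc)
  then have "colsp (wcore m A) \<subseteq> colsp (coreEP A)" using colsp_sub by blast
  then show ?thesis using coreEP_cep[of A] unfolding cep_def by blast
qed

lemma EP_lemma:
  fixes A :: "complex^'n^'n"
  assumes "colsp (cadj A) \<subseteq> colsp A"
  shows "is_EP A"
proof -
  define P where "P = A ** MP A"
  define Q where "Q = MP A ** A"
  have Ph: "cadj P = P" "P ** P = P" "P ** A = A"
    unfolding P_def using MP_props[of A] by (auto simp: matrix_mul_assoc)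
  have Qh: "cadj Q = Q" "Q ** Q = Q"
    unfolding Q_def using MP_props[of A] by (auto simp: matrix_mul_assoc)
  obtain Z where Z: "cadj A = A ** Z" using assms colsp_sub by blast
  have "Q = cadj Q" using Qh by simp
  also have "\<dots> = A ** Z ** cadj (MP A)" unfolding Q_def using Z by (simp add: cadj_mult)
  finally have Qe: "Q = A ** Z ** cadj (MP A)" .
  have "P ** Q = Q" unfolding Qe using Ph(3) by (metis matrix_mul_assoc)
  moreover have "trace P = trace Q" unfolding P_def Q_def by (rule trace_mul_sym)
  ultimately have "P = Q" using trace_proj_eq Ph Qh by blast
  then have "A = cadj Q ** A" using Ph Qh by simp
  then have "A = cadj A ** (cadj (MP A) ** A)" unfolding Q_def by (simp add: cadj_mult matrix_mul_assoc)
  then have "colsp A \<subseteq> colsp (cadj A)" using colsp_sub by blast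
  then show ?thesis unfolding is_EP_def using assms by blast
qed

lemma EP_I1:
  fixes A :: "complex^'n^'n"
  assumes "is_EP A" shows "I1 A"
proof -
  obtain Z where Z: "cadj A = A ** Z" using assms colsp_eq unfolding is_EP_def by metis
  have "A = A ** (MP A ** A)" using MP_props(1)[of A] by (simp add: matrix_mul_assoc)
  also have "\<dots> = A ** cadj (MP A ** A)" using MP_props(4)[of A] by simp
  also have "\<dots> = A ** A ** (Z ** cadj (MP A))" using Z by (simp add: cadj_mult matrix_mul_assoc)
  finally show ?thesis unfolding I1_def by blast
qed


lemma mzero_mult[simp]: "(0::'a::semiring_1^'n^'m) ** A = 0" "A ** (0::'a::semiring_1^'n^'m) = 0"
  by (simp_all add: matrix_matrix_mult_def vec_eq_iff)

lemma peel1: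
  fixes A X :: "complex^'n^'n"
  assumes "X ** A ** mpow A k = mpow A k"
  shows "X ** mpow A (Suc n) ** mpow A k = mpow A n ** mpow A k"
proof -
  have "X ** mpow A (Suc n) ** mpow A k = X ** A ** (mpow A n ** mpow A k)"
    by (simp add: matrix_mul_assoc)
  also have "\<dots> = X ** A ** mpow A k ** mpow A n" by (simp add: mpow_comm matrix_mul_assoc)
  also have "\<dots> = mpow A n ** mpow A k" using assms by (simp add: mpow_comm)
  finally show ?thesis .
qed

lemma pow_peel:
  fixes A X :: "complex^'n^'n"
  assumes "X ** A ** mpow A k = mpow A k"
  shows "mpow X i ** mpow A (i + j) ** mpow A k = mpow A j ** mpow A k"
proof (induction i)
  case 0 then show ?case by simp
next
  case (Suc i)
  have "mpow X (Suc i) ** mpow A (Suc i + j) ** mpow A k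
      = mpow X i ** (X ** mpow A (Suc (i + j)) ** mpow A k)"
    by (simp only: mpow_Suc_right[of X i] matrix_mul_assoc add_Suc)
  also have "\<dots> = mpow X i ** mpow A (i + j) ** mpow A k"
    using peel1[OF assms] by (simp add: matrix_mul_assoc)
  finally show ?case using Suc by simp
qed

lemma part_a:
  fixes A :: "complex^'n^'n"
  assumes "m \<ge> 1"
  shows "wcore m A = 0 \<longleftrightarrow> mpow A (ind A) = 0"
proof
  define X where "X = coreEP A"
  define B where "B = mpow A (ind A)"
  have c: "cep A X" unfolding X_def by (rule coreEP_cep)
  have XAB: "X ** A ** B = B" using cep_props(2)[OF c] B_def by simp
  assume W0: "wcore m A = 0"
  have "wcore m A ** mpow A m ** B
      = mpow X (m + 1) ** mpow A m ** (projA (mpow A m) ** mpow A m) ** B"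
    unfolding wcore_def WG_def X_def by (simp add: matrix_mul_assoc)
  also have "\<dots> = mpow X (m + 1) ** (mpow A m ** mpow A m) ** B"
    by (simp only: projA_props(3) matrix_mul_assoc)
  also have "\<dots> = mpow X (m + 1) ** mpow A ((m + 1) + (m - 1)) ** B"
    using assms by (simp add: mpow_add[symmetric])
  also have "\<dots> = mpow A (m - 1) ** B"
    using pow_peel[of X A "ind A" "m + 1" "m - 1"] XAB B_def by (simp del: mpow.simps)
  finally have "mpow A (m - 1) ** B = 0" using W0 by simp
  moreover obtain Y where "B = mpow A (m - 1) ** B ** Y" using B_stable_pow B_def by blast
  ultimately show "mpow A (ind A) = 0" using B_def by (metis mzero_mult(1))
next
  assume B0: "mpow A (ind A) = 0"
  obtain V where "coreEP A = mpow A (ind A) ** V" using cep_props(3)[OF coreEP_cep] by blast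
  then have "coreEP A = 0" using B0 by simp
  then show "wcore m A = 0" unfolding wcore_def WG_def by simp
qed


lemma colsp_W_A:
  fixes A :: "complex^'n^'n"
  assumes "colsp A \<subseteq> colsp (wcore m A)" "m \<ge> 1"
  shows "I1 A" "wcore m A = coreEP A"
proof -
  show "I1 A" using assms(1) W_sub_B A_sub_B_I1 by blast
  then show "wcore m A = coreEP A" using W_eq_X assms(2) by blast
qed

lemma part_b:
  fixes A :: "complex^'n^'n"
  assumes "m \<ge> 1"
  shows "wcore m A = A \<longleftrightarrow> is_EP A \<and> tripotent A"
proof
  assume W: "wcore m A = A"
  then have "wcore m A = coreEP A" using colsp_W_A[of A m] assms by simp
  then have "cep A A" using W coreEP_cep by metis
  then show "is_EP A \<and> tripotent A" unfolding cep_def is_EP_def tripotent_def by blast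
next
  assume h: "is_EP A \<and> tripotent A"
  then have t: "A ** A ** A = A" unfolding tripotent_def by blast
  then have i1: "I1 A" unfolding I1_def by (metis)
  have "cep A A" unfolding cep_def using t h I1_colsp_B[OF i1] is_EP_def by blast
  then have "coreEP A = A" by (rule coreEP_eqI)
  then show "wcore m A = A" using W_eq_X[OF i1 assms] by simp
qed

lemma part_c:
  fixes A :: "complex^'n^'n"
  assumes "m \<ge> 1"
  shows "wcore m A = cadj A \<longleftrightarrow> is_EP A \<and> partial_isometry A"
proof
  assume W: "wcore m A = cadj A"
  have "colsp (cadj A) \<subseteq> colsp A" using W_sub_B[of m A] B_sub_A[of A] W by simp
  then have ep: "is_EP A" by (rule EP_lemma)
  then have i1: "I1 A" by (rule EP_I1)
  then have "wcore m A = coreEP A" using W_eq_X assms by blast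
  then have "cep A (cadj A)" using W coreEP_cep by metis
  then have "cadj A ** A ** cadj A = cadj A" unfolding cep_def by blast
  then have "cadj (cadj A ** A ** cadj A) = A" by simp
  then have "A ** cadj A ** A = A" by (simp add: cadj_mult matrix_mul_assoc)
  then show "is_EP A \<and> partial_isometry A" using ep unfolding partial_isometry_def by blast
next
  assume h: "is_EP A \<and> partial_isometry A"
  then have i1: "I1 A" using EP_I1 by blast
  have "A ** cadj A ** A = A" using h unfolding partial_isometry_def by blast
  then have "cadj (A ** cadj A ** A) = cadj A" by simp
  then have t: "cadj A ** A ** cadj A = cadj A" by (simp add: cadj_mult matrix_mul_assoc)
  have "cep A (cadj A)" unfolding cep_def using t h I1_colsp_B[OF i1] unfolding is_EP_def by simp
  then have "coreEP A = cadj A" by (rule coreEP_eqI)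
  then show "wcore m A = cadj A" using W_eq_X[OF i1 assms] by simp
qed

lemma part_d:
  fixes A :: "complex^'n^'n"
  assumes "m \<ge> 1"
  shows "wcore m A = projA A \<longleftrightarrow> idempotent_mat A"
proof
  assume W: "wcore m A = projA A"
  have "A = wcore m A ** A" using W projA_props(3)[of A] by simp
  then have "colsp A \<subseteq> colsp (wcore m A)" using colsp_sub by blast
  then have "wcore m A = coreEP A" using colsp_W_A assms by blast
  then have "cep A (projA A)" using W coreEP_cep by metis
  then have PAP: "projA A ** A ** projA A = projA A" unfolding cep_def by blast
  then have AP: "A ** projA A = projA A" using projA_props(3)[of A] by simp
  have "A ** A = A ** (projA A ** A)" using projA_props(3)[of A] by simp
  also have "\<dots> = A ** projA A ** A" by (simp add: matrix_mul_assoc)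
  also have "\<dots> = A" using AP projA_props(3)[of A] by simp
  finally show "idempotent_mat A" unfolding idempotent_mat_def .
next
  assume h: "idempotent_mat A"
  then have AA: "A ** A = A" unfolding idempotent_mat_def .
  then have i1: "I1 A" unfolding I1_def by (metis matrix_mul_rid)
  let ?P = "projA A"
  have "?P ** A ** ?P = A ** ?P" using projA_props(3)[of A] by simp
  also have "\<dots> = A ** A ** MP A" using projA_props(4)[of A] by (simp add: matrix_mul_assoc)
  also have "\<dots> = ?P" using AA projA_props(4)[of A] by simp
  finally have t: "?P ** A ** ?P = ?P" .
  have "colsp ?P = colsp A" using projA_props(3,4)[of A] colsp_eq by metis
  then have "cep A ?P" unfolding cep_def using t projA_props(1)[of A] I1_colsp_B[OF i1] by simp
  then have "coreEP A = ?P" by (rule coreEP_eqI)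
  then show "wcore m A = ?P" using W_eq_X[OF i1 assms] by simp
qed

theorem theorem7p2:
  fixes A :: "complex^'n^'n" and m :: nat
  assumes "m \<ge> 1"
  shows "(wcore m A = 0 \<longleftrightarrow> mpow A (ind A) = 0)
       \<and> (wcore m A = A \<longleftrightarrow> is_EP A \<and> tripotent A)
       \<and> (wcore m A = cadj A \<longleftrightarrow> is_EP A \<and> partial_isometry A)
       \<and> (wcore m A = projA A \<longleftrightarrow> idempotent_mat A)"
  using part_a[OF assms] part_b[OF assms] part_c[OF assms] part_d[OF assms] by blast

end
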